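(* Let $\lambda$ be a partition and $\sigma$ a sorted tableau of $\mathrm{dg}(\lambda)$. Then $\mathrm{maj}(\tau)=\mathrm{maj}(\sigma)$ for every $\tau\in\mathcal{F}(\sigma)$.
   Context: Diagrams and fillings: for a partition $\lambda=(\lambda_1\ge\dots\ge\lambda_n>0)$, $\mathrm{dg}(\lambda)$ is the set of cells $(i,r)$, $1\le i\le n$, $1\le r\le\lambda_i$ (columns from the left, rows from the bottom). A filling is $\sigma:\mathrm{dg}(\lambda)\to\mathbb{Z}_{>0}$; a basement row $0$ with all entries $\infty$ is adjoined. $\mathrm{leg}(i,r)=\lambda_i-r$. Triples: for $u<v$, $r\ge1$, $(v,r),(u,r)\in\mathrm{dg}(\lambda)$, cells $(v,r),(u,r),(u,r-1)$; with $a=\sigma(v,r),b=\sigma(u,r),c=\sigma(u,r-1)$ counterclockwise (inversion) if $a<b\le c$ or $c<a<b$ or $b\le c<a$, clockwise otherwise. Descent: $(u,r)$, $r\ge2$, with $\sigma(u,r)>\sigma(u,r-1)$; $\mathrm{maj}(\sigma)=\sum_{\text{descents}}(\mathrm{leg}+1)$. Sorted tableau: for non-identical columns $A$ left of $B$ of equal height with entries $a_k,b_k$ bottom to top and $r$ least with $a_r\ne b_r$: $A\lhd B$ if $r=1$ and $a_1<b_1$, or $r\ge2$ and the cells of $b_r,a_r,a_{r-1}$ do not form a counterclockwise triple; $\sigma$ is sorted if any two columns of equal height, $A$ left of $B$, are identical or satisfy $A\lhd B$. Operator $\mathcal{T}_i^{(r)}$ (defined when columns $i,i+1$ agree in rows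 $<r$ and differ in row $r$): swap entries of $(i,r),(i+1,r)$; then repeatedly, if cells $(i+1,r+1),(i,r+1)$ exist and the triple $(i+1,r+1),(i,r+1),(i,r)$ changed orientation (clockwise/counterclockwise) under the last swap, swap entries of $(i,r+1),(i+1,r+1)$ and increase $r$ by one; otherwise stop. PDS: let $\mathbf{w_0}=(s_1)(s_2s_1)\cdots(s_{n-1}\cdots s_2s_1)=s_{j_N}\cdots s_{j_1}$ ($N=\binom n2$). For $v\in S_n$ set $v_{(0)}=v$ and for $k=1,\dots,N$: $v_{(k)}=v_{(k-1)}s_{j_k}$ if $\ell(v_{(k-1)}s_{j_k})<\ell(v_{(k-1)})$, else $v_{(k)}=v_{(k-1)}$. The PDS of $v$ is the product, in the same left-to-right order, of those $s_{j_k}$ at which the multiplication was performed; writing it $s_{i_p}\cdots s_{i_1}$, set $\mathcal{T}_v^{(r)}=\mathcal{T}_{i_p}^{(r)}\circ\cdots\circ\mathcal{T}_{i_1}^{(r)}$. Blocks: in a filling of a rectangle, a block in row $r$ is a maximal set of consecutive columns $i,\dots,j$ that agree in every row $s<r$. For row $r$ of $\sigma$ with entries $b=(b_1,\dots,b_n)$ and blocks $B^{(1)},\dots,B^{(\ell)}$, let $W_r(\sigma)$ be the set of distinct words obtained by permuting entries of $b$ only within blocks; for $w\in W_r(\sigma)$ let $\tilde w\in S_n$ be the shortest permutation with $(b_{\tilde w^{-1}(1)},\dots,b_{\tilde w^{-1}(n)})=w$. Family: if $\sigma$ is a sorted tableau of an $m\times n$ rectangle, set $\mathcal F^{(m)}=\{\sigma\}$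 and for $r=m,m-1,\dots,1$ set $\mathcal F^{(r-1)}=\{\mathcal{T}^{(r)}_{\tilde w}(\tau):\tau\in\mathcal F^{(r)},\,w\in W_r(\sigma)\}$; $\mathcal F(\sigma)=\mathcal F^{(0)}$. For general $\lambda$, $\sigma$ is the left-to-right concatenation of sorted tableaux $\sigma_1,\dots,\sigma_k$ of the maximal rectangles of equal-height columns, and $\mathcal F(\sigma)$ is the set of concatenations $\tau_1\cdots\tau_k$ with $\tau_j\in\mathcal F(\sigma_j)$. *)

theory Defs
  imports "HOL-Library.Extended_Nat" "HOL-Combinatorics.Permutations"
begin

text \<open>Cells are pairs (i,r): column i (1-based, from the left), row r (from the bottom).
A filling is a function on cells; only its values on the diagram matter.\<close>

type_synonym filling = "nat \<times> nat \<Rightarrow> nat"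

definition partition :: "nat list \<Rightarrow> bool" where
  "partition lam \<longleftrightarrow> sorted_wrt (\<ge>) lam \<and> (\<forall>x\<in>set lam. x > 0)"

definition colh :: "nat list \<Rightarrow> nat \<Rightarrow> nat" where
  "colh lam i = lam ! (i - 1)"

definition dg :: "nat list \<Rightarrow> (nat \<times> nat) set" where
  "dg lam = {(i, r). 1 \<le> i \<and> i \<le> length lam \<and> 1 \<le> r \<and> r \<le> colh lam i}"

definition is_filling :: "nat list \<Rightarrow> filling \<Rightarrow> bool" where
  "is_filling lam \<sigma> \<longleftrightarrow> (\<forall>c\<in>dg lam. \<sigma> c > 0)"

definition ent :: "filling \<Rightarrow> nat \<times> nat \<Rightarrow> enat" where
  "ent \<sigma> c = (if snd c = 0 then \<infinity> else enat (\<sigma> c))"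

definition leg :: "nat list \<Rightarrow> nat \<times> nat \<Rightarrow> nat" where
  "leg lam c = colh lam (fst c) - snd c"

text \<open>Counterclockwise orientation of values a = sigma(v,r), b = sigma(u,r), c = sigma(u,r-1).\<close>
definition ccw :: "enat \<Rightarrow> enat \<Rightarrow> enat \<Rightarrow> bool" where
  "ccw a b c \<longleftrightarrow> (a < b \<and> b \<le> c) \<or> (c < a \<and> a < b) \<or> (b \<le> c \<and> c < a)"

definition ccw_triple :: "filling \<Rightarrow> nat \<Rightarrow> nat \<Rightarrow> nat \<Rightarrow> bool" where
  "ccw_triple \<sigma> v u r \<longleftrightarrow> ccw (ent \<sigma> (v, r)) (ent \<sigma> (u, r)) (ent \<sigma> (u, r - 1))"

definition maj :: "nat list \<Rightarrow> filling \<Rightarrow> nat" where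
  "maj lam \<sigma> = (\<Sum>c\<in>{c \<in> dg lam. 2 \<le> snd c \<and> \<sigma> c > \<sigma> (fst c, snd c - 1)}. leg lam c + 1)"

definition col_lhd :: "nat list \<Rightarrow> filling \<Rightarrow> nat \<Rightarrow> nat \<Rightarrow> bool" where
  "col_lhd lam \<sigma> a b \<longleftrightarrow>
     (let r = (LEAST r. 1 \<le> r \<and> r \<le> colh lam a \<and> \<sigma> (a, r) \<noteq> \<sigma> (b, r)) in
       (r = 1 \<and> \<sigma> (a, 1) < \<sigma> (b, 1)) \<or> (2 \<le> r \<and> \<not> ccw_triple \<sigma> b a r))"

definition sorted_tableau :: "nat list \<Rightarrow> filling \<Rightarrow> bool" where
  "sorted_tableau lam \<sigma> \<longleftrightarrow>
     (\<forall>a b. 1 \<le> a \<and> a < b \<and> b \<le> length lam \<and> colh lam a = colh lam b \<longrightarrow>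
        (\<forall>r. 1 \<le> r \<and> r \<le> colh lam a \<longrightarrow> \<sigma> (a, r) = \<sigma> (b, r)) \<or> col_lhd lam \<sigma> a b)"

definition swap_cells :: "filling \<Rightarrow> nat \<times> nat \<Rightarrow> nat \<times> nat \<Rightarrow> filling" where
  "swap_cells \<sigma> p q = \<sigma>(p := \<sigma> q, q := \<sigma> p)"

text \<open>Propagation loop: tau is the filling right after the swap in row r (so the old entry
of (i,r) is now at (i+1,r)). The fuel argument only ensures termination; it is instantiated
with the column height, which bounds the number of steps.\<close>
fun T_loop :: "nat \<Rightarrow> nat list \<Rightarrow> nat \<Rightarrow> nat \<Rightarrow> filling \<Rightarrow> filling" where
  "T_loop 0 lam i r \<tau> = \<tau>"
| "T_loop (Suc k) lam i r \<tau> =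
     (if (i + 1, r + 1) \<in> dg lam \<and> (i, r + 1) \<in> dg lam \<and>
         ccw (ent \<tau> (i + 1, r + 1)) (ent \<tau> (i, r + 1)) (ent \<tau> (i + 1, r))
           \<noteq> ccw (ent \<tau> (i + 1, r + 1)) (ent \<tau> (i, r + 1)) (ent \<tau> (i, r))
      then T_loop k lam i (r + 1) (swap_cells \<tau> (i, r + 1) (i + 1, r + 1))
      else \<tau>)"

definition T_op :: "nat list \<Rightarrow> nat \<Rightarrow> nat \<Rightarrow> filling \<Rightarrow> filling" where
  "T_op lam i r \<sigma> = T_loop (colh lam i) lam i r (swap_cells \<sigma> (i, r) (i + 1, r))"

definition sref :: "nat \<Rightarrow> nat \<Rightarrow> nat" where
  "sref j x = (if x = j then j + 1 else if x = j + 1 then j else x)"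

definition perm_len :: "nat \<Rightarrow> (nat \<Rightarrow> nat) \<Rightarrow> nat" where
  "perm_len n v = card {(a, b). 1 \<le> a \<and> a < b \<and> b \<le> n \<and> v a > v b}"

text \<open>Indices j_1, ..., j_N of w0 = (s_1)(s_2 s_1)...(s_{n-1}...s_1) = s_{j_N}...s_{j_1}.\<close>
definition w0_seq :: "nat \<Rightarrow> nat list" where
  "w0_seq n = concat (map (\<lambda>k. [1..<k + 1]) (rev [1..<n]))"

text \<open>Indices i_1, i_2, ..., i_p of the PDS, in the order the multiplications are performed.\<close>
fun pds_aux :: "nat \<Rightarrow> (nat \<Rightarrow> nat) \<Rightarrow> nat list \<Rightarrow> nat list" where
  "pds_aux n v [] = []"
| "pds_aux n v (j # js) =
     (if perm_len n (v \<circ> sref j) < perm_len n v then j # pds_aux n (v \<circ> sref j) js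
      else pds_aux n v js)"

definition pds :: "nat \<Rightarrow> (nat \<Rightarrow> nat) \<Rightarrow> nat list" where
  "pds n v = pds_aux n v (w0_seq n)"

text \<open>T_v^(r) = T_{i_p} o ... o T_{i_1}: T_{i_1} is applied first.\<close>
definition T_perm :: "nat list \<Rightarrow> nat \<Rightarrow> (nat \<Rightarrow> nat) \<Rightarrow> nat \<Rightarrow> filling \<Rightarrow> filling" where
  "T_perm lam n v r \<sigma> = fold (\<lambda>i \<tau>. T_op lam i r \<tau>) (pds n v) \<sigma>"

definition same_block :: "filling \<Rightarrow> nat \<Rightarrow> nat \<Rightarrow> nat \<Rightarrow> bool" where
  "same_block \<sigma> r i j \<longleftrightarrow>
     (\<forall>k. min i j \<le> k \<and> k \<le> max i j \<longrightarrow> (\<forall>s. 1 \<le> s \<and> s < r \<longrightarrow> \<sigma> (k, s) = \<sigma> (i, s)))"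

definition row_word :: "nat \<Rightarrow> filling \<Rightarrow> nat \<Rightarrow> nat list" where
  "row_word n \<sigma> r = map (\<lambda>k. \<sigma> (k, r)) [1..<n + 1]"

definition W_set :: "nat \<Rightarrow> filling \<Rightarrow> nat \<Rightarrow> nat list set" where
  "W_set n \<sigma> r = {map (\<lambda>k. \<sigma> (\<pi> k, r)) [1..<n + 1] | \<pi>.
      \<pi> permutes {1..n} \<and> (\<forall>k\<in>{1..n}. same_block \<sigma> r k (\<pi> k))}"

definition wtilde :: "nat \<Rightarrow> filling \<Rightarrow> nat \<Rightarrow> nat list \<Rightarrow> (nat \<Rightarrow> nat)" where
  "wtilde n \<sigma> r w =
     (let C = {v. v permutes {1..n} \<and> map (\<lambda>k. \<sigma> (inv v k, r)) [1..<n + 1] = w}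
      in SOME v. v \<in> C \<and> (\<forall>u\<in>C. perm_len n v \<le> perm_len n u))"

text \<open>fam_aux m n sigma k = F^(m-k).\<close>
fun fam_aux :: "nat \<Rightarrow> nat \<Rightarrow> filling \<Rightarrow> nat \<Rightarrow> filling set" where
  "fam_aux m n \<sigma> 0 = {\<sigma>}"
| "fam_aux m n \<sigma> (Suc k) =
     {T_perm (replicate n m) n (wtilde n \<sigma> (m - k) w) (m - k) \<tau> | \<tau> w.
        \<tau> \<in> fam_aux m n \<sigma> k \<and> w \<in> W_set n \<sigma> (m - k)}"

definition rect_family :: "nat \<Rightarrow> nat \<Rightarrow> filling \<Rightarrow> filling set" where
  "rect_family m n \<sigma> = fam_aux m n \<sigma> m"

definition max_rect :: "nat list \<Rightarrow> nat \<Rightarrow> nat \<Rightarrow> bool" where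
  "max_rect lam a b \<longleftrightarrow> 1 \<le> a \<and> a \<le> b \<and> b \<le> length lam \<and>
     (\<forall>i. a \<le> i \<and> i \<le> b \<longrightarrow> colh lam i = colh lam a) \<and>
     (a = 1 \<or> colh lam (a - 1) \<noteq> colh lam a) \<and>
     (b = length lam \<or> colh lam (b + 1) \<noteq> colh lam a)"

definition shift_filling :: "filling \<Rightarrow> nat \<Rightarrow> filling" where
  "shift_filling \<sigma> a = (\<lambda>(i, r). \<sigma> (i + a - 1, r))"

definition family :: "nat list \<Rightarrow> filling \<Rightarrow> filling set" where
  "family lam \<sigma> = {\<tau>. \<forall>a b. max_rect lam a b \<longrightarrow>
      (\<exists>\<rho>\<in>rect_family (colh lam a) (b - a + 1) (shift_filling \<sigma> a).
         \<forall>i r. 1 \<le> i \<and> i \<le> b - a + 1 \<and> 1 \<le> r \<and> r \<le> colh lam a \<longrightarrow>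
           \<tau> (i + a - 1, r) = \<rho> (i, r))}"

end

theory Submission imports Defs "HOL-Library.Multiset" begin

definition SW :: "filling \<Rightarrow> nat \<Rightarrow> nat set \<Rightarrow> filling" where
 "SW \<sigma> i S = (\<lambda>(k,\<rho>). if \<rho> \<in> S \<and> k = i then \<sigma>(i+1,\<rho>) else if \<rho> \<in> S \<and> k = i+1 then \<sigma>(i,\<rho>) else \<sigma>(k,\<rho>))"

definition Dw :: "nat \<Rightarrow> filling \<Rightarrow> nat \<times> nat \<Rightarrow> nat" where
 "Dw m \<tau> c = (if 2 \<le> snd c \<and> \<tau> c > \<tau>(fst c, snd c - 1) then m - snd c + 1 else 0)"

lemma colh_rep: "1\<le>i \<Longrightarrow> i\<le>n \<Longrightarrow> colh (replicate n m) i = m"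
  unfolding colh_def by simp

lemma dg_rep: "dg (replicate n m) = {1..n} \<times> {1..m}"
  unfolding dg_def using colh_rep by auto

lemma maj_rep: "maj (replicate n m) \<tau> = (\<Sum>c\<in>{1..n}\<times>{1..m}. Dw m \<tau> c)"
proof -
  have "maj (replicate n m) \<tau> = (\<Sum>c\<in>{1..n}\<times>{1..m}. if 2 \<le> snd c \<and> \<tau> c > \<tau> (fst c, snd c - 1) then leg (replicate n m) c + 1 else 0)"
    unfolding maj_def dg_rep by (rule sum.inter_filter) auto
  also have "\<dots> = (\<Sum>c\<in>{1..n}\<times>{1..m}. Dw m \<tau> c)"
    by (rule sum.cong) (auto simp: Dw_def leg_def colh_rep)
  finally show ?thesis .
qed

lemma sum_rows: "(\<Sum>c\<in>{1..n}\<times>{1..m}. f c) = (\<Sum>\<rho>\<in>{1..m}. \<Sum>k\<in>{1..n}. f (k,\<rho>))"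
proof -
  have "(\<Sum>k\<in>{1..n}. \<Sum>\<rho>\<in>{1..m}. f (k,\<rho>)) = (\<Sum>(k,\<rho>)\<in>{1..n}\<times>{1..m}. f (k,\<rho>))"
    by (rule sum.cartesian_product)
  then show ?thesis by (simp add: sum.swap[of _ "{1..m}"] case_prod_beta')
qed

lemma sum_pair: fixes i n :: nat assumes "1 \<le> i" "i+1 \<le> n"
  shows "(\<Sum>k\<in>{1..n}. f k) = f i + f (i+1) + (\<Sum>k\<in>{1..n}-{i,i+1}. f k)"
proof -
  have "(\<Sum>k\<in>{1..n}. f k) = f i + (\<Sum>k\<in>{1..n}-{i}. f k)"
    using assms by (subst sum.remove[of _ i]) auto
  also have "(\<Sum>k\<in>{1..n}-{i}. f k) = f (i+1) + (\<Sum>k\<in>{1..n}-{i}-{i+1}. f k)"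
    using assms by (subst sum.remove[of _ "i+1"]) auto
  finally show ?thesis by (simp add: set_diff_eq insert_commute add.assoc)
qed

lemma ccw_key:
  fixes a b c d :: nat
  assumes "ccw (enat a) (enat b) (enat c) = ccw (enat a) (enat b) (enat d)"
  shows "(if b > c then 1 else 0) + (if a > d then 1 else (0::nat)) = (if b > d then 1 else 0) + (if a > c then 1 else 0)"
  using assms unfolding ccw_def by auto

lemma SW_out: "\<rho> \<notin> S \<Longrightarrow> SW \<sigma> i S (k,\<rho>) = \<sigma>(k,\<rho>)"
  by (simp add: SW_def)
lemma SW_in1: "\<rho> \<in> S \<Longrightarrow> SW \<sigma> i S (i,\<rho>) = \<sigma>(i+1,\<rho>)"
  by (simp add: SW_def)
lemma SW_in2: "\<rho> \<in> S \<Longrightarrow> SW \<sigma> i S (i+1,\<rho>) = \<sigma>(i,\<rho>)"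
  by (simp add: SW_def)
lemma SW_oth: "k \<noteq> i \<Longrightarrow> k \<noteq> i+1 \<Longrightarrow> SW \<sigma> i S (k,\<rho>) = \<sigma>(k,\<rho>)"
  by (simp add: SW_def)

lemma SW_pair:
  assumes "1 \<le> r0" "r0 \<le> s" "s \<le> m"
    and h0: "r0 = 1 \<or> \<sigma>(i,r0-1) = \<sigma>(i+1,r0-1)"
    and hs: "s = m \<or> ccw (enat (\<sigma>(i+1,s+1))) (enat (\<sigma>(i,s+1))) (enat (\<sigma>(i,s))) = ccw (enat (\<sigma>(i+1,s+1))) (enat (\<sigma>(i,s+1))) (enat (\<sigma>(i+1,s)))"
    and "\<rho> \<le> m"
  shows "Dw m (SW \<sigma> i {r0..s}) (i,\<rho>) + Dw m (SW \<sigma> i {r0..s}) (i+1,\<rho>) = Dw m \<sigma> (i,\<rho>) + Dw m \<sigma> (i+1,\<rho>)"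
proof -
  let ?S = "{r0..s}"
  consider "\<rho> < r0" | "\<rho> = r0" | "r0 < \<rho> \<and> \<rho> \<le> s" | "\<rho> = s+1" | "\<rho> > s+1" by linarith
  then show ?thesis
  proof cases
    case 1
    then have a: "\<rho>-1 \<notin> ?S" "\<rho> \<notin> ?S" by auto
    show ?thesis unfolding Dw_def by (simp only: fst_conv snd_conv SW_out[OF a(1)] SW_out[OF a(2)])
  next
    case 2
    then have a: "\<rho>-1 \<notin> ?S" "\<rho> \<in> ?S" using assms(1,2) by auto
    show ?thesis
    proof (cases "r0 = 1")
      case True then show ?thesis using 2 by (simp add: Dw_def)
    next
      case False
      then have "\<sigma>(i,\<rho>-1) = \<sigma>(i+1,\<rho>-1)" using h0 2 by simp
      then show ?thesis unfolding Dw_def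
        by (simp only: fst_conv snd_conv SW_out[OF a(1)] SW_in1[OF a(2)] SW_in2[OF a(2)])
    qed
  next
    case 3
    then have a: "\<rho>-1 \<in> ?S" "\<rho> \<in> ?S" using assms(1) by auto
    show ?thesis unfolding Dw_def
      by (simp only: fst_conv snd_conv SW_in1[OF a(1)] SW_in2[OF a(1)] SW_in1[OF a(2)] SW_in2[OF a(2)])
  next
    case 4
    with hs assms have hs': "ccw (enat (\<sigma>(i+1,s+1))) (enat (\<sigma>(i,s+1))) (enat (\<sigma>(i,s))) = ccw (enat (\<sigma>(i+1,s+1))) (enat (\<sigma>(i,s+1))) (enat (\<sigma>(i+1,s)))"
      by auto
    have a: "\<rho>-1 \<in> ?S" "\<rho> \<notin> ?S" "\<rho>-1 = s" "2 \<le> \<rho>" using 4 assms(1,2) by auto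
    have k: "(if \<sigma>(i,s+1) > \<sigma>(i,s) then 1 else 0) + (if \<sigma>(i+1,s+1) > \<sigma>(i+1,s) then 1 else (0::nat)) = (if \<sigma>(i,s+1) > \<sigma>(i+1,s) then 1 else 0) + (if \<sigma>(i+1,s+1) > \<sigma>(i,s) then 1 else 0)"
      using ccw_key[OF hs'] by simp
    have sS: "s \<in> ?S" "s+1 \<notin> ?S" using assms(2) by auto
    have f: "SW \<sigma> i ?S (i,s) = \<sigma>(i+1,s)" "SW \<sigma> i ?S (Suc i,s) = \<sigma>(i,s)"
       "SW \<sigma> i ?S (i,Suc s) = \<sigma>(i,Suc s)" "SW \<sigma> i ?S (Suc i,Suc s) = \<sigma>(Suc i,Suc s)"
      using SW_in1[OF sS(1)] SW_in2[OF sS(1)] SW_out[OF sS(2)] by auto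
    have e1: "Dw m (SW \<sigma> i ?S) (i,\<rho>) = (if \<sigma>(i,s+1) > \<sigma>(i+1,s) then m-\<rho>+1 else 0)"
      unfolding Dw_def using a 4 by (simp add: f)
    have e2: "Dw m (SW \<sigma> i ?S) (i+1,\<rho>) = (if \<sigma>(i+1,s+1) > \<sigma>(i,s) then m-\<rho>+1 else 0)"
      unfolding Dw_def using a 4 by (simp add: f)
    have e3: "Dw m \<sigma> (i,\<rho>) = (if \<sigma>(i,s+1) > \<sigma>(i,s) then m-\<rho>+1 else 0)"
      unfolding Dw_def using a 4 by simp
    have e4: "Dw m \<sigma> (i+1,\<rho>) = (if \<sigma>(i+1,s+1) > \<sigma>(i+1,s) then m-\<rho>+1 else 0)"
      unfolding Dw_def using a 4 by simp
    show ?thesis unfolding e1 e2 e3 e4 using k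
      by (cases "\<sigma>(i,s+1) > \<sigma>(i+1,s)"; cases "\<sigma>(i+1,s+1) > \<sigma>(i,s)"; cases "\<sigma>(i,s+1) > \<sigma>(i,s)"; cases "\<sigma>(i+1,s+1) > \<sigma>(i+1,s)") simp_all
  next
    case 5
    then have a: "\<rho>-1 \<notin> ?S" "\<rho> \<notin> ?S" by auto
    show ?thesis unfolding Dw_def by (simp only: fst_conv snd_conv SW_out[OF a(1)] SW_out[OF a(2)])
  qed
qed


definition stopc :: "filling \<Rightarrow> nat \<Rightarrow> nat \<Rightarrow> bool" where
  "stopc \<sigma> i s \<longleftrightarrow> ccw (enat (\<sigma>(i+1,s+1))) (enat (\<sigma>(i,s+1))) (enat (\<sigma>(i,s))) = ccw (enat (\<sigma>(i+1,s+1))) (enat (\<sigma>(i,s+1))) (enat (\<sigma>(i+1,s)))"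

lemma swap_SW: assumes "r0 \<le> r+1"
  shows "swap_cells (SW \<sigma> i {r0..r}) (i,r+1) (i+1,r+1) = SW \<sigma> i {r0..r+1}"
proof (rule ext, clarify)
  fix x y
  show "swap_cells (SW \<sigma> i {r0..r}) (i,r+1) (i+1,r+1) (x,y) = SW \<sigma> i {r0..r+1} (x,y)"
    using assms unfolding swap_cells_def SW_def by auto
qed

lemma swap_SW0: "swap_cells \<sigma> (i,r) (i+1,r) = SW \<sigma> i {r..r}"
proof (rule ext, clarify)
  fix x y
  show "swap_cells \<sigma> (i,r) (i+1,r) (x,y) = SW \<sigma> i {r..r} (x,y)"
    unfolding swap_cells_def SW_def by auto
qed

lemma T_loop_SW:
  assumes i: "1 \<le> i" "i+1 \<le> n"
  shows "1 \<le> r0 \<Longrightarrow> r0 \<le> r \<Longrightarrow> r \<le> m \<Longrightarrow> m \<le> k + r \<Longrightarrow>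
    \<exists>s. r \<le> s \<and> s \<le> m \<and> (s = m \<or> stopc \<sigma> i s) \<and> T_loop k (replicate n m) i r (SW \<sigma> i {r0..r}) = SW \<sigma> i {r0..s}"
proof (induction k arbitrary: r)
  case 0
  then show ?case by auto
next
  case (Suc k)
  let ?\<tau> = "SW \<sigma> i {r0..r}"
  have dg: "((i + 1, r + 1) \<in> dg (replicate n m) \<and> (i, r + 1) \<in> dg (replicate n m)) = (r+1 \<le> m)"
    using i by (auto simp: dg_rep)
  have r1: "r+1 \<notin> {r0..r}" "r \<in> {r0..r}" using Suc.prems by auto
  have en: "ent ?\<tau> (i+1,r+1) = enat (\<sigma>(i+1,r+1))" "ent ?\<tau> (i,r+1) = enat (\<sigma>(i,r+1))"
     "ent ?\<tau> (i+1,r) = enat (\<sigma>(i,r))" "ent ?\<tau> (i,r) = enat (\<sigma>(i+1,r))"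
    using Suc.prems SW_out[OF r1(1)] SW_in1[OF r1(2)] SW_in2[OF r1(2)] by (auto simp: ent_def)
  show ?case
  proof (cases "r+1 \<le> m \<and> ccw (ent ?\<tau> (i + 1, r + 1)) (ent ?\<tau> (i, r + 1)) (ent ?\<tau> (i + 1, r))
           \<noteq> ccw (ent ?\<tau> (i + 1, r + 1)) (ent ?\<tau> (i, r + 1)) (ent ?\<tau> (i, r))")
    case True
    then have eq: "T_loop (Suc k) (replicate n m) i r ?\<tau> = T_loop k (replicate n m) i (r+1) (SW \<sigma> i {r0..r+1})"
      using dg swap_SW[of r0 r \<sigma> i] Suc.prems by simp
    from Suc.IH[of "r+1"] True Suc.prems obtain s where
      "r+1 \<le> s \<and> s \<le> m \<and> (s = m \<or> stopc \<sigma> i s) \<and> T_loop k (replicate n m) i (r+1) (SW \<sigma> i {r0..r+1}) = SW \<sigma> i {r0..s}"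
      by auto
    then show ?thesis using eq by (intro exI[of _ s]) auto
  next
    case False
    then have eq: "T_loop (Suc k) (replicate n m) i r ?\<tau> = ?\<tau>"
      using dg by auto
    have "r = m \<or> stopc \<sigma> i r"
      using False Suc.prems(3) unfolding en stopc_def by auto
    then show ?thesis using eq Suc.prems by (intro exI[of _ r]) auto
  qed
qed

lemma T_op_SW:
  assumes "1 \<le> i" "i+1 \<le> n" "1 \<le> r" "r \<le> m"
  shows "\<exists>s. r \<le> s \<and> s \<le> m \<and> (s = m \<or> stopc \<sigma> i s) \<and> T_op (replicate n m) i r \<sigma> = SW \<sigma> i {r..s}"
proof -
  have "colh (replicate n m) i = m" using assms colh_rep by simp
  then have "T_op (replicate n m) i r \<sigma> = T_loop m (replicate n m) i r (SW \<sigma> i {r..r})"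
    unfolding T_op_def swap_SW0 by simp
  then show ?thesis using T_loop_SW[OF assms(1,2), of r r m m \<sigma>] assms by auto
qed

lemma maj_SW:
  assumes "1 \<le> i" "i+1 \<le> n" "1 \<le> r0" "r0 \<le> s" "s \<le> m"
    and h0: "r0 = 1 \<or> \<sigma>(i,r0-1) = \<sigma>(i+1,r0-1)"
    and hs: "s = m \<or> stopc \<sigma> i s"
  shows "maj (replicate n m) (SW \<sigma> i {r0..s}) = maj (replicate n m) \<sigma>"
proof -
  let ?\<sigma>' = "SW \<sigma> i {r0..s}"
  have row: "(\<Sum>k\<in>{1..n}. Dw m ?\<sigma>' (k,\<rho>)) = (\<Sum>k\<in>{1..n}. Dw m \<sigma> (k,\<rho>))" if "\<rho> \<in> {1..m}" for \<rho>
  proof -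
    have oth: "(\<Sum>k\<in>{1..n}-{i,i+1}. Dw m ?\<sigma>' (k,\<rho>)) = (\<Sum>k\<in>{1..n}-{i,i+1}. Dw m \<sigma> (k,\<rho>))"
      by (rule sum.cong) (auto simp: Dw_def SW_oth)
    have pr: "Dw m ?\<sigma>' (i,\<rho>) + Dw m ?\<sigma>' (i+1,\<rho>) = Dw m \<sigma> (i,\<rho>) + Dw m \<sigma> (i+1,\<rho>)"
      using SW_pair[OF assms(3,4,5) h0, of \<rho>] hs that unfolding stopc_def by auto
    show ?thesis
      using sum_pair[OF assms(1,2), of "\<lambda>k. Dw m ?\<sigma>' (k,\<rho>)"] sum_pair[OF assms(1,2), of "\<lambda>k. Dw m \<sigma> (k,\<rho>)"] oth pr
      by simp
  qed
  show ?thesis unfolding maj_rep sum_rows using row by (rule sum.cong[OF refl])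
qed


definition agree :: "filling \<Rightarrow> nat \<Rightarrow> nat \<Rightarrow> bool" where
  "agree \<sigma> r j \<longleftrightarrow> (\<forall>s. 1 \<le> s \<and> s < r \<longrightarrow> \<sigma>(j,s) = \<sigma>(j+1,s))"

lemma T_op_props:
  assumes "1 \<le> i" "i+1 \<le> n" "1 \<le> r" "r \<le> m" and h0: "r = 1 \<or> \<tau>(i,r-1) = \<tau>(i+1,r-1)"
  shows "maj (replicate n m) (T_op (replicate n m) i r \<tau>) = maj (replicate n m) \<tau> \<and>
         (\<forall>k s. s < r \<longrightarrow> T_op (replicate n m) i r \<tau> (k,s) = \<tau>(k,s))"
proof -
  obtain s where s: "r \<le> s" "s \<le> m" "s = m \<or> stopc \<tau> i s" "T_op (replicate n m) i r \<tau> = SW \<tau> i {r..s}"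
    using T_op_SW[OF assms(1-4)] by blast
  show ?thesis using maj_SW[OF assms(1,2,3) s(1,2) h0 s(3)] s(4) by (auto simp: SW_def)
qed

lemma fold_T:
  assumes "1 \<le> r" "r \<le> m"
  shows "(\<forall>j\<in>set xs. 1 \<le> j \<and> j+1 \<le> n \<and> agree \<sigma> r j) \<Longrightarrow> (\<forall>k s. 1 \<le> s \<and> s < r \<longrightarrow> \<tau>(k,s) = \<sigma>(k,s)) \<Longrightarrow>
    maj (replicate n m) (fold (\<lambda>i \<tau>. T_op (replicate n m) i r \<tau>) xs \<tau>) = maj (replicate n m) \<tau> \<and>
    (\<forall>k s. 1 \<le> s \<and> s < r \<longrightarrow> fold (\<lambda>i \<tau>. T_op (replicate n m) i r \<tau>) xs \<tau> (k,s) = \<sigma>(k,s))"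
proof (induction xs arbitrary: \<tau>)
  case Nil
  then show ?case by simp
next
  case (Cons j xs)
  have j: "1 \<le> j" "j+1 \<le> n" "agree \<sigma> r j" using Cons.prems by auto
  have h0: "r = 1 \<or> \<tau>(j,r-1) = \<tau>(j+1,r-1)"
  proof (cases "r = 1")
    case False
    then have "\<sigma>(j,r-1) = \<sigma>(j+1,r-1)" using j(3) assms unfolding agree_def by auto
    then show ?thesis using Cons.prems(2) False assms by auto
  qed simp
  from T_op_props[OF j(1,2) assms h0] have
    P: "maj (replicate n m) (T_op (replicate n m) j r \<tau>) = maj (replicate n m) \<tau>"
       "\<forall>k s. s < r \<longrightarrow> T_op (replicate n m) j r \<tau> (k,s) = \<tau>(k,s)" by auto
  have "\<forall>k s. 1 \<le> s \<and> s < r \<longrightarrow> T_op (replicate n m) j r \<tau> (k,s) = \<sigma>(k,s)"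
    using P(2) Cons.prems(2) by auto
  from Cons.IH[OF _ this] Cons.prems(1) P(1) show ?case by simp
qed

definition Inv :: "filling \<Rightarrow> nat \<Rightarrow> nat \<Rightarrow> (nat \<Rightarrow> nat) \<Rightarrow> bool" where
  "Inv \<sigma> r n v \<longleftrightarrow> (\<forall>t. 1 \<le> t \<and> t < n \<and> \<not> agree \<sigma> r t \<longrightarrow> (\<forall>x\<in>{1..n}. x \<le> t \<longleftrightarrow> v x \<le> t))"

lemma perm_len_mono:
  assumes "1 \<le> j" "j < n" "\<not> v (j+1) < v j"
  shows "perm_len n v \<le> perm_len n (v \<circ> sref j)"
proof -
  let ?A = "{(a, b). 1 \<le> a \<and> a < b \<and> b \<le> n \<and> v a > v b}"
  let ?B = "{(a, b). 1 \<le> a \<and> a < b \<and> b \<le> n \<and> (v \<circ> sref j) a > (v \<circ> sref j) b}"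
  let ?f = "\<lambda>(a,b). (sref j a, sref j b)"
  have ss: "sref j (sref j x) = x" for x by (simp add: sref_def)
  have "inj_on ?f ?A"
    by (rule inj_onI) (auto simp: sref_def split: if_splits)
  moreover have "?f ` ?A \<subseteq> ?B"
  proof clarify
    fix a b assume ab: "1 \<le> a" "a < b" "b \<le> n" "v b < v a"
    have "(a,b) \<noteq> (j,j+1)" using ab assms(3) by auto
    then show "1 \<le> sref j a \<and> sref j a < sref j b \<and> sref j b \<le> n \<and> (v \<circ> sref j) (sref j b) < (v \<circ> sref j) (sref j a)"
      using ab assms(1,2) by (auto simp: sref_def ss)
  qed
  moreover have "finite ?B"
    by (rule finite_subset[of _ "{1..n} \<times> {1..n}"]) auto
  ultimately have "card ?A \<le> card ?B" by (rule card_inj_on_le)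
  then show ?thesis unfolding perm_len_def .
qed

lemma pds_aux_good:
  "(\<forall>j\<in>set js. 1 \<le> j \<and> j < n) \<Longrightarrow> Inv \<sigma> r n v \<Longrightarrow> \<forall>j\<in>set (pds_aux n v js). 1 \<le> j \<and> j < n \<and> agree \<sigma> r j"
proof (induction js arbitrary: v)
  case Nil
  then show ?case by simp
next
  case (Cons j js)
  show ?case
  proof (cases "perm_len n (v \<circ> sref j) < perm_len n v")
    case True
    have j: "1 \<le> j" "j < n" using Cons.prems by auto
    have lt: "v (j+1) < v j" using perm_len_mono[OF j, of v] True by linarith
    have ag: "agree \<sigma> r j"
    proof (rule ccontr)
      assume "\<not> agree \<sigma> r j"
      then have "\<forall>x\<in>{1..n}. x \<le> j \<longleftrightarrow> v x \<le> j" using Cons.prems(2) j unfolding Inv_def by blast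
      then have A: "j \<in> {1..n} \<Longrightarrow> (j \<le> j) = (v j \<le> j)" "j+1 \<in> {1..n} \<Longrightarrow> (j+1 \<le> j) = (v (j+1) \<le> j)" by blast+
      have "j \<in> {1..n}" "j+1 \<in> {1..n}" using j by auto
      then have "v j \<le> j" "\<not> v (j+1) \<le> j" using A by auto
      then show False using lt by linarith
    qed
    have "Inv \<sigma> r n (v \<circ> sref j)"
      unfolding Inv_def
    proof (intro allI impI ballI)
      fix t x assume t: "1 \<le> t \<and> t < n \<and> \<not> agree \<sigma> r t" and x: "x \<in> {1..n}"
      have tj: "t \<noteq> j" using t ag by auto
      have sx: "sref j x \<in> {1..n}" using x j by (auto simp: sref_def)
      have "(x \<le> t) = (sref j x \<le> t)" using tj by (auto simp: sref_def)
      also have "\<dots> = (v (sref j x) \<le> t)" using Cons.prems(2) t sx unfolding Inv_def by blast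
      finally show "(x \<le> t) = ((v \<circ> sref j) x \<le> t)" by simp
    qed
    moreover have "\<forall>j\<in>set js. 1 \<le> j \<and> j < n" using Cons.prems(1) by simp
    ultimately have IH: "\<forall>i\<in>set (pds_aux n (v \<circ> sref j) js). 1 \<le> i \<and> i < n \<and> agree \<sigma> r i"
      using Cons.IH by blast
    show ?thesis using True IH j ag by simp
  next
    case False
    then show ?thesis using Cons by simp
  qed
qed

lemma w0_seq_range: "j \<in> set (w0_seq n) \<Longrightarrow> 1 \<le> j \<and> j < n"
  unfolding w0_seq_def by auto

lemma T_perm_good:
  assumes "1 \<le> r" "r \<le> m" "Inv \<sigma> r n v" "\<forall>k s. 1 \<le> s \<and> s < r \<longrightarrow> \<tau>(k,s) = \<sigma>(k,s)"
  shows "maj (replicate n m) (T_perm (replicate n m) n v r \<tau>) = maj (replicate n m) \<tau> \<and>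
    (\<forall>k s. 1 \<le> s \<and> s < r \<longrightarrow> T_perm (replicate n m) n v r \<tau> (k,s) = \<sigma>(k,s))"
proof -
  have "\<forall>j\<in>set (pds n v). 1 \<le> j \<and> j < n \<and> agree \<sigma> r j"
    unfolding pds_def by (rule pds_aux_good[OF _ assms(3)]) (use w0_seq_range in blast)
  then have "\<forall>j\<in>set (pds n v). 1 \<le> j \<and> j+1 \<le> n \<and> agree \<sigma> r j" by auto
  from fold_T[OF assms(1,2) this assms(4)] show ?thesis unfolding T_perm_def .
qed


lemma perm_len_transp:
  assumes "1 \<le> x" "x < y" "y \<le> n" "v y < v x"
  shows "perm_len n (v \<circ> transpose x y) < perm_len n v"
proof -
  let ?A = "{(a, b). 1 \<le> a \<and> a < b \<and> b \<le> n \<and> v a > v b}"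
  let ?B = "{(a, b). 1 \<le> a \<and> a < b \<and> b \<le> n \<and> (v \<circ> transpose x y) a > (v \<circ> transpose x y) b}"
  let ?t = "transpose x y"
  let ?f = "\<lambda>(a,b). if x \<le> a \<and> b \<le> y then (a,b) else (?t a, ?t b)"
  have inj: "inj_on ?f ?B"
  proof (rule inj_onI)
    fix p q assume p: "p \<in> ?B" and q: "q \<in> ?B" and eq: "?f p = ?f q"
    obtain a b c d where pq: "p = (a,b)" "q = (c,d)" by (cases p, cases q) auto
    show "p = q"
      using p q eq assms unfolding pq by (auto simp: transpose_def split: if_splits)
  qed
  have sub: "?f ` ?B \<subseteq> ?A - {(x,y)}"
  proof
    fix p assume "p \<in> ?f ` ?B"
    then obtain a b where ab: "(a,b) \<in> ?B" and pe: "p = ?f (a,b)" by auto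
    show "p \<in> ?A - {(x,y)}" unfolding pe
      using ab assms by (auto simp: transpose_def split: if_splits)
  qed
  have finA: "finite ?A"
    by (rule finite_subset[of _ "{1..n} \<times> {1..n}"]) auto
  have "card ?B \<le> card (?A - {(x,y)})"
    using card_inj_on_le[OF inj sub] finA by auto
  also have "\<dots> < card ?A"
    using finA assms by (intro card_Diff1_less) auto
  finally show ?thesis unfolding perm_len_def .
qed


lemma sb_bound:
  assumes "same_block \<sigma> r a c" "\<not> agree \<sigma> r t"
  shows "a \<le> t \<longleftrightarrow> c \<le> t"
proof (rule ccontr)
  assume ne: "(a \<le> t) \<noteq> (c \<le> t)"
  then have rng: "min a c \<le> t \<and> t \<le> max a c" "min a c \<le> t+1 \<and> t+1 \<le> max a c" by auto
  have "agree \<sigma> r t" unfolding agree_def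
  proof (intro allI impI)
    fix s assume "1 \<le> s \<and> s < r"
    then show "\<sigma>(t,s) = \<sigma>(t+1,s)" using assms(1) rng unfolding same_block_def by metis
  qed
  with assms(2) show False by simp
qed

lemma min_Inv:
  fixes n :: nat
  defines "N \<equiv> {1..n}"
  assumes pi: "\<pi> permutes N" "\<forall>k\<in>N. same_block \<sigma> r k (\<pi> k)"
    and v: "v permutes N" "\<forall>y\<in>N. \<sigma>(y,r) = \<sigma>(\<pi>(v y),r)"
    and mn: "\<forall>u. u permutes N \<and> (\<forall>y\<in>N. \<sigma>(y,r) = \<sigma>(\<pi>(u y),r)) \<longrightarrow> perm_len n v \<le> perm_len n u"
  shows "Inv \<sigma> r n v"
  unfolding Inv_def
proof (intro allI impI ballI)
  fix t x assume t: "1 \<le> t \<and> t < n \<and> \<not> agree \<sigma> r t" and x: "x \<in> {1..n}"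
  show "(x \<le> t) = (v x \<le> t)"
  proof (rule ccontr)
    assume neq: "(x \<le> t) \<noteq> (v x \<le> t)"
    define b where "b = (\<lambda>y. \<sigma>(y,r))"
    define L where "L = {1..t}"
    define M where "M = {y\<in>N. v y \<le> t}"
    define X where "X = {y\<in>L. t < v y}"
    define Y where "Y = {y. t < y \<and> y \<le> n \<and> v y \<le> t}"
    have LN: "L \<subseteq> N" using t unfolding L_def N_def by auto
    have vN: "y \<in> N \<Longrightarrow> v y \<in> N" for y using permutes_in_image[OF v(1)] by simp
    have piN: "y \<in> N \<Longrightarrow> \<pi> y \<in> N" for y using permutes_in_image[OF pi(1)] by simp
    have piL: "\<pi> ` L = L"
    proof
      show "\<pi> ` L \<subseteq> L"
      proof
        fix z assume "z \<in> \<pi> ` L"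
        then obtain y where y: "y \<in> L" "z = \<pi> y" by auto
        have "y \<in> N" using y LN by auto
        then have "y \<le> t \<longleftrightarrow> \<pi> y \<le> t" "\<pi> y \<in> N" using sb_bound[of \<sigma> r y "\<pi> y" t] pi(2) t piN by auto
        then show "z \<in> L" using y unfolding L_def N_def by auto
      qed
    next
      show "L \<subseteq> \<pi> ` L"
      proof
        fix z assume z: "z \<in> L"
        have zN: "z \<in> N" using z LN by auto
        define y where "y = inv \<pi> z"
        have yz: "\<pi> y = z" unfolding y_def using permutes_inverses(1)[OF pi(1)] by simp
        have yN: "y \<in> N" using zN yz permutes_in_image[OF pi(1), of y] by simp
        have "y \<le> t \<longleftrightarrow> \<pi> y \<le> t" using sb_bound[of \<sigma> r y "\<pi> y" t] pi(2) t yN by auto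
        then have "y \<in> L" using z yz yN unfolding L_def N_def by auto
        then show "z \<in> \<pi> ` L" using yz by auto
      qed
    qed
    have vM: "v ` M = L"
    proof
      show "v ` M \<subseteq> L"
      proof
        fix z assume "z \<in> v ` M"
        then obtain y where y: "y \<in> M" "z = v y" by blast
        then have "y \<in> N" "v y \<le> t" by (simp_all add: M_def)
        then have "v y \<in> N" "v y \<le> t" using vN by blast+
        then show "z \<in> L" using y(2) by (simp add: L_def N_def)
      qed
    next
      show "L \<subseteq> v ` M"
      proof
        fix z assume z: "z \<in> L"
        have zN: "z \<in> N" using z LN by auto
        define y where "y = inv v z"
        have yz: "v y = z" unfolding y_def using permutes_inverses(1)[OF v(1)] by simp
        have yN: "y \<in> N" using zN yz permutes_in_image[OF v(1), of y] by simp
        have "y \<in> M" using yN yz z unfolding M_def L_def by auto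
        then show "z \<in> v ` M" using yz by auto
      qed
    qed
    have finN: "finite N" unfolding N_def by simp
    have MN: "M \<subseteq> N" unfolding M_def by auto
    have E1: "image_mset b (mset_set M) = image_mset b (mset_set L)"
    proof -
      have "image_mset b (mset_set M) = image_mset (\<lambda>y. b (\<pi> (v y))) (mset_set M)"
        by (rule image_mset_cong) (use v(2) MN finN finite_subset[OF MN finN] in \<open>auto simp: b_def\<close>)
      also have "\<dots> = image_mset (b \<circ> \<pi>) (image_mset v (mset_set M))"
        by (simp add: multiset.map_comp comp_def)
      also have "image_mset v (mset_set M) = mset_set L"
        using image_mset_mset_set[OF permutes_inj_on[OF v(1)], of M] vM by simp
      also have "image_mset (b \<circ> \<pi>) (mset_set L) = image_mset b (image_mset \<pi> (mset_set L))"
        by (simp add: multiset.map_comp)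
      also have "image_mset \<pi> (mset_set L) = mset_set L"
        using image_mset_mset_set[OF permutes_inj_on[OF pi(1)], of L] piL by simp
      finally show ?thesis .
    qed
    have finL: "finite L" unfolding L_def by simp
    have finM: "finite M" using MN finN finite_subset by blast
    have finX: "finite X" unfolding X_def using finL by simp
    have finY: "finite Y" unfolding Y_def by (rule finite_subset[of _ "{..n}"]) auto
    have hML: "M = (M \<inter> L) \<union> Y" "(M \<inter> L) \<inter> Y = {}"
      unfolding M_def L_def Y_def N_def by auto
    have hLM: "L = (M \<inter> L) \<union> X" "(M \<inter> L) \<inter> X = {}"
      using LN unfolding M_def L_def X_def N_def by auto
    have "image_mset b (mset_set (M \<inter> L)) + image_mset b (mset_set Y) = image_mset b (mset_set (M \<inter> L)) + image_mset b (mset_set X)"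
      using E1 mset_set_Union[of "M \<inter> L" Y] mset_set_Union[of "M \<inter> L" X] hML hLM finM finL finX finY
      by (metis finite_Int image_mset_union)
    then have EXY: "image_mset b (mset_set Y) = image_mset b (mset_set X)" by simp
    have "X \<noteq> {} \<or> Y \<noteq> {}"
    proof (cases "x \<le> t")
      case True
      then have "x \<in> X" using neq x unfolding X_def L_def by auto
      then show ?thesis by auto
    next
      case False
      then have "x \<in> Y" using neq x unfolding Y_def by auto
      then show ?thesis by auto
    qed
    then have "Y \<noteq> {}" using EXY finX finY by (auto simp: mset_set_empty_iff)
    then obtain y where y: "y \<in> Y" by auto
    then have "b y \<in># image_mset b (mset_set X)" using EXY finY by (metis image_eqI finite_set_mset_mset_set multiset.set_map)
    then obtain x' where x': "x' \<in> X" "b x' = b y" using finX by auto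
    have ord: "1 \<le> x'" "x' < y" "y \<le> n" "v y < v x'"
      using x'(1) y unfolding X_def Y_def L_def by auto
    have x'N: "x' \<in> N" "y \<in> N" using ord unfolding N_def by auto
    define u where "u = v \<circ> transpose x' y"
    have up: "u permutes N" unfolding u_def
      by (rule permutes_compose[OF permutes_swap_id[OF x'N] v(1)])
    have uc: "\<forall>z\<in>N. \<sigma>(z,r) = \<sigma>(\<pi>(u z),r)"
    proof
      fix z assume zN: "z \<in> N"
      show "\<sigma>(z,r) = \<sigma>(\<pi>(u z),r)"
      proof (cases "z = x'")
        case True
        then show ?thesis using v(2) x'N x'(2) unfolding u_def b_def by simp
      next
        case False
        show ?thesis
        proof (cases "z = y")
          case True
          then show ?thesis using v(2) x'N x'(2) False unfolding u_def b_def by simp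
        next
          case False2: False
          then show ?thesis using v(2) zN False unfolding u_def by simp
        qed
      qed
    qed
    have "perm_len n u < perm_len n v" unfolding u_def by (rule perm_len_transp[OF ord])
    moreover have "perm_len n v \<le> perm_len n u" using mn up uc by blast
    ultimately show False by simp
  qed
qed


lemma wtilde_Inv:
  assumes "w \<in> W_set n \<sigma> r"
  shows "Inv \<sigma> r n (wtilde n \<sigma> r w)"
proof -
  define N where "N = {1..n}"
  obtain \<pi> where pi: "\<pi> permutes N" "\<forall>k\<in>N. same_block \<sigma> r k (\<pi> k)"
    and w: "w = map (\<lambda>k. \<sigma> (\<pi> k, r)) [1..<n + 1]"
    using assms unfolding W_set_def N_def by auto
  define C where "C = {v. v permutes {1..n} \<and> map (\<lambda>k. \<sigma> (inv v k, r)) [1..<n + 1] = w}"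
  have Cchar: "u \<in> C \<longleftrightarrow> (\<forall>y\<in>N. \<sigma>(y,r) = \<sigma>(\<pi>(u y),r))" if u: "u permutes N" for u
  proof -
    have "u \<in> C \<longleftrightarrow> (\<forall>k\<in>N. \<sigma>(inv u k, r) = \<sigma>(\<pi> k, r))"
      using u unfolding C_def w N_def by (auto simp: map_eq_conv)
    also have "\<dots> \<longleftrightarrow> (\<forall>y\<in>N. \<sigma>(y,r) = \<sigma>(\<pi>(u y),r))"
    proof
      assume H: "\<forall>k\<in>N. \<sigma>(inv u k, r) = \<sigma>(\<pi> k, r)"
      show "\<forall>y\<in>N. \<sigma>(y,r) = \<sigma>(\<pi>(u y),r)"
      proof
        fix y assume "y \<in> N"
        then have "u y \<in> N" using permutes_in_image[OF u] by simp
        then show "\<sigma>(y,r) = \<sigma>(\<pi>(u y),r)" using H permutes_inverses(2)[OF u, of y] by metis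
      qed
    next
      assume H: "\<forall>y\<in>N. \<sigma>(y,r) = \<sigma>(\<pi>(u y),r)"
      show "\<forall>k\<in>N. \<sigma>(inv u k, r) = \<sigma>(\<pi> k, r)"
      proof
        fix k assume k: "k \<in> N"
        have "inv u k \<in> N" using k permutes_in_image[OF permutes_inv[OF u]] by simp
        then show "\<sigma>(inv u k, r) = \<sigma>(\<pi> k, r)" using H permutes_inverses(1)[OF u, of k] by metis
      qed
    qed
    finally show ?thesis .
  qed
  have ipi: "inv \<pi> \<in> C"
    using Cchar[OF permutes_inv[OF pi(1)]] permutes_inverses(1)[OF pi(1)] by simp
  obtain v0 where "v0 \<in> C \<and> (\<forall>u. u \<in> C \<longrightarrow> perm_len n v0 \<le> perm_len n u)"
    using ex_has_least_nat[of "\<lambda>v. v \<in> C", OF ipi, of "perm_len n"] by blast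
  then have ex: "\<exists>v. v \<in> C \<and> (\<forall>u\<in>C. perm_len n v \<le> perm_len n u)" by blast
  have wt: "wtilde n \<sigma> r w = (SOME v. v \<in> C \<and> (\<forall>u\<in>C. perm_len n v \<le> perm_len n u))"
    unfolding wtilde_def C_def Let_def ..
  have P: "wtilde n \<sigma> r w \<in> C \<and> (\<forall>u\<in>C. perm_len n (wtilde n \<sigma> r w) \<le> perm_len n u)"
    unfolding wt by (rule someI_ex[OF ex])
  have vp: "wtilde n \<sigma> r w permutes N" using P unfolding C_def N_def by simp
  show ?thesis
    unfolding N_def[symmetric]
    apply (rule min_Inv[of \<pi> n \<sigma> r "wtilde n \<sigma> r w", folded N_def])
    using pi vp P Cchar by auto
qed

lemma fam_aux_good:
  "k \<le> m \<Longrightarrow> \<tau> \<in> fam_aux m n \<sigma> k \<Longrightarrow> maj (replicate n m) \<tau> = maj (replicate n m) \<sigma> \<and>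
     (\<forall>i s. 1 \<le> s \<and> s \<le> m - k \<longrightarrow> \<tau>(i,s) = \<sigma>(i,s))"
proof (induction k arbitrary: \<tau>)
  case 0
  then show ?case by simp
next
  case (Suc k)
  from Suc.prems(2) obtain \<tau>0 w where t: "\<tau> = T_perm (replicate n m) n (wtilde n \<sigma> (m - k) w) (m - k) \<tau>0"
    "\<tau>0 \<in> fam_aux m n \<sigma> k" "w \<in> W_set n \<sigma> (m - k)" by auto
  have IH: "maj (replicate n m) \<tau>0 = maj (replicate n m) \<sigma>" "\<forall>i s. 1 \<le> s \<and> s \<le> m - k \<longrightarrow> \<tau>0(i,s) = \<sigma>(i,s)"
    using Suc.IH[OF _ t(2)] Suc.prems(1) by auto
  have r: "1 \<le> m - k" "m - k \<le> m" using Suc.prems(1) by auto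
  have ag: "\<forall>i s. 1 \<le> s \<and> s < m - k \<longrightarrow> \<tau>0(i,s) = \<sigma>(i,s)" using IH(2) by auto
  from T_perm_good[OF r wtilde_Inv[OF t(3)] ag] IH(1) t(1)
  show ?case by auto
qed

lemma rect_family_maj:
  "\<rho> \<in> rect_family m n \<sigma> \<Longrightarrow> maj (replicate n m) \<rho> = maj (replicate n m) \<sigma>"
  unfolding rect_family_def using fam_aux_good[of m m] by auto


definition Eg :: "nat list \<Rightarrow> filling \<Rightarrow> nat \<times> nat \<Rightarrow> nat" where
  "Eg lam \<tau> c = (if 2 \<le> snd c \<and> \<tau> c > \<tau>(fst c, snd c - 1) then leg lam c + 1 else 0)"

lemma dg_Sigma: "dg lam = Sigma {1..length lam} (\<lambda>i. {1..colh lam i})"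
  unfolding dg_def by auto

lemma finite_dg: "finite (dg lam)"
  unfolding dg_Sigma by auto

lemma maj_Eg: "maj lam \<tau> = (\<Sum>c\<in>dg lam. Eg lam \<tau> c)"
  unfolding maj_def Eg_def by (rule sum.inter_filter[OF finite_dg])

lemma colh_mono:
  assumes "partition lam" "1 \<le> i" "i \<le> j" "j \<le> length lam"
  shows "colh lam j \<le> colh lam i"
proof (cases "i = j")
  case False
  then have "i - 1 < j - 1" "j - 1 < length lam" using assms by auto
  then have "lam ! (j-1) \<le> lam ! (i-1)"
    using sorted_wrt_nth_less[of "(\<ge>)" lam "i-1" "j-1"] assms(1) unfolding partition_def by auto
  then show ?thesis unfolding colh_def .
qed simp

lemma colh_in: "1 \<le> i \<Longrightarrow> i \<le> length lam \<Longrightarrow> colh lam i \<in> set lam"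
  unfolding colh_def by auto

lemma rect_exists:
  assumes "partition lam" "h \<in> set lam"
  shows "\<exists>a b. max_rect lam a b \<and> colh lam a = h \<and> {i. 1 \<le> i \<and> i \<le> length lam \<and> colh lam i = h} = {a..b}"
proof -
  define S where "S = {i. 1 \<le> i \<and> i \<le> length lam \<and> colh lam i = h}"
  obtain p where p: "p < length lam" "lam ! p = h" using assms(2) by (auto simp: in_set_conv_nth)
  have pS: "p+1 \<in> S" using p unfolding S_def colh_def by auto
  have finS: "finite S" unfolding S_def by (rule finite_subset[of _ "{..length lam}"]) auto
  define a where "a = Min S"
  define b where "b = Max S"
  have aS: "a \<in> S" unfolding a_def using finS pS Min_in by blast
  have bS: "b \<in> S" unfolding b_def using finS pS Max_in by blast
  have amin: "\<And>i. i \<in> S \<Longrightarrow> a \<le> i" unfolding a_def using finS by simp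
  have bmax: "\<And>i. i \<in> S \<Longrightarrow> i \<le> b" unfolding b_def using finS by simp
  have ab: "a \<le> b" using amin bS by blast
  have mid: "colh lam i = h" if "a \<le> i" "i \<le> b" for i
  proof -
    have "colh lam i \<le> colh lam a" using colh_mono[OF assms(1), of a i] aS bS that unfolding S_def by auto
    moreover have "colh lam b \<le> colh lam i" using colh_mono[OF assms(1), of i b] aS bS that unfolding S_def by auto
    ultimately show ?thesis using aS bS unfolding S_def by auto
  qed
  have Seq: "S = {a..b}"
  proof
    show "S \<subseteq> {a..b}" using amin bmax by auto
    show "{a..b} \<subseteq> S"
    proof
      fix i assume "i \<in> {a..b}"
      then have i: "a \<le> i" "i \<le> b" by simp_all
      have "1 \<le> a" "b \<le> length lam" using aS bS unfolding S_def by simp_all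
      then show "i \<in> S" using mid[OF i] i unfolding S_def by simp
    qed
  qed
  have "max_rect lam a b"
    unfolding max_rect_def
  proof (intro conjI)
    show "1 \<le> a" using aS unfolding S_def by simp
    show "a \<le> b" by fact
    show "b \<le> length lam" using bS unfolding S_def by simp
    show "\<forall>i. a \<le> i \<and> i \<le> b \<longrightarrow> colh lam i = colh lam a" using mid ab by auto
    show "a = 1 \<or> colh lam (a - 1) \<noteq> colh lam a"
    proof (rule ccontr)
      assume "\<not> (a = 1 \<or> colh lam (a - 1) \<noteq> colh lam a)"
      then have "a - 1 \<in> S" using aS unfolding S_def by auto
      then show False using amin[of "a-1"] aS unfolding S_def by auto
    qed
    show "b = length lam \<or> colh lam (b + 1) \<noteq> colh lam a"
    proof (rule ccontr)
      assume "\<not> (b = length lam \<or> colh lam (b + 1) \<noteq> colh lam a)"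
      then have "b + 1 \<in> S" using aS bS unfolding S_def by auto
      then show False using bmax[of "b+1"] by auto
    qed
  qed
  moreover have "colh lam a = h" using aS by (simp add: S_def)
  moreover have "{i. 1 \<le> i \<and> i \<le> length lam \<and> colh lam i = h} = {a..b}" using Seq by (simp add: S_def)
  ultimately show ?thesis by blast
qed

lemma rect_sum:
  assumes mr: "max_rect lam a b"
    and ag: "\<forall>i r. 1 \<le> i \<and> i \<le> b - a + 1 \<and> 1 \<le> r \<and> r \<le> colh lam a \<longrightarrow> \<tau>(i + a - 1, r) = \<rho>(i, r)"
  shows "(\<Sum>c\<in>{a..b}\<times>{1..colh lam a}. Eg lam \<tau> c) = maj (replicate (b - a + 1) (colh lam a)) \<rho>"
proof -
  let ?h = "colh lam a" and ?w = "b - a + 1"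
  have a1: "1 \<le> a" "a \<le> b" using mr unfolding max_rect_def by auto
  have hc0: "\<forall>i. a \<le> i \<and> i \<le> b \<longrightarrow> colh lam i = ?h" using mr unfolding max_rect_def by blast
  have hc: "\<And>i. a \<le> i \<Longrightarrow> i \<le> b \<Longrightarrow> colh lam i = ?h" using hc0 by blast
  have pw: "Eg lam \<tau> (j + a - 1, r) = Dw ?h \<rho> (j,r)" if jr: "1 \<le> j" "j \<le> ?w" "1 \<le> r" "r \<le> ?h" for j r
  proof -
    have l: "colh lam (j + a - 1) = ?h" using jr a1 by (intro hc) linarith+
    have e1: "\<tau>(j + a - 1, r) = \<rho>(j,r)" using ag jr by auto
    have e2: "\<tau>(j + a - 1, r - 1) = \<rho>(j,r - 1)" if r2: "2 \<le> r"
    proof -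
      have "1 \<le> j \<and> j \<le> ?w \<and> 1 \<le> r - 1 \<and> r - 1 \<le> ?h" using jr r2 by auto
      then show ?thesis using ag by blast
    qed
    show ?thesis using l e1 e2 unfolding Eg_def Dw_def leg_def by auto
  qed
  have "(\<Sum>c\<in>{1..?w}\<times>{1..?h}. Dw ?h \<rho> c) = (\<Sum>c\<in>{a..b}\<times>{1..?h}. Eg lam \<tau> c)"
    apply (rule sum.reindex_bij_witness[of _ "\<lambda>(i,r). (i - a + 1, r)" "\<lambda>(j,r). (j + a - 1, r)"])
    subgoal for c using a1 by auto
    subgoal for c using a1 by auto
    subgoal for c using a1 by auto
    subgoal for c using a1 by auto
    subgoal for c using pw by (cases c) auto
    done
  then show ?thesis unfolding maj_rep by simp
qed

theorem mainTheorem7: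
  fixes lam :: "nat list" and \<sigma> \<tau> :: filling
  assumes "partition lam"
    and "is_filling lam \<sigma>"
    and "sorted_tableau lam \<sigma>"
    and "\<tau> \<in> family lam \<sigma>"
  shows "maj lam \<tau> = maj lam \<sigma>"
proof -
  let ?g = "\<lambda>c. colh lam (fst c)"
  have gi: "?g ` dg lam \<subseteq> set lam" using colh_in unfolding dg_def by auto
  have grp: "(\<Sum>c\<in>dg lam. Eg lam f c) = (\<Sum>h\<in>set lam. \<Sum>c\<in>{c. c \<in> dg lam \<and> ?g c = h}. Eg lam f c)" for f
    by (rule sum.group[OF finite_dg _ gi, symmetric]) simp
  have blk: "(\<Sum>c\<in>{c. c \<in> dg lam \<and> ?g c = h}. Eg lam \<tau> c) = (\<Sum>c\<in>{c. c \<in> dg lam \<and> ?g c = h}. Eg lam \<sigma> c)"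
    if h: "h \<in> set lam" for h
  proof -
    obtain a b where ab: "max_rect lam a b" "colh lam a = h"
      "{i. 1 \<le> i \<and> i \<le> length lam \<and> colh lam i = h} = {a..b}"
      using rect_exists[OF assms(1) h] by blast
    have set: "{c. c \<in> dg lam \<and> ?g c = h} = {a..b}\<times>{1..colh lam a}"
    proof -
      have "{c. c \<in> dg lam \<and> ?g c = h} = {i. 1 \<le> i \<and> i \<le> length lam \<and> colh lam i = h}\<times>{1..h}"
        unfolding dg_def by auto
      then show ?thesis using ab by simp
    qed
    obtain \<rho> where \<rho>: "\<rho> \<in> rect_family (colh lam a) (b - a + 1) (shift_filling \<sigma> a)"
      "\<forall>i r. 1 \<le> i \<and> i \<le> b - a + 1 \<and> 1 \<le> r \<and> r \<le> colh lam a \<longrightarrow> \<tau> (i + a - 1, r) = \<rho> (i, r)"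
      using assms(4) ab(1) unfolding family_def by blast
    have sh: "\<forall>i r. 1 \<le> i \<and> i \<le> b - a + 1 \<and> 1 \<le> r \<and> r \<le> colh lam a \<longrightarrow> \<sigma> (i + a - 1, r) = shift_filling \<sigma> a (i, r)"
      by (simp add: shift_filling_def)
    show ?thesis unfolding set rect_sum[OF ab(1) \<rho>(2)] rect_sum[OF ab(1) sh]
      by (rule rect_family_maj[OF \<rho>(1)])
  qed
  show ?thesis unfolding maj_Eg grp using blk by (rule sum.cong[OF refl])
qed

end
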